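(* Let $T$ and $T'$ be Morita context rings. If the Morita context with which $T$ is associated, or the one with which $T'$ is associated, is strict, then $\mathrm{Iso}_0(T,T')\subseteq\mathrm{Iso}_g(T,T')$. More precisely, every element of $\mathrm{Iso}_0^0(T,T')$ is graded and every element of $\mathrm{Iso}_0^1(T,T')$ is anti-graded.
   Context: All rings have an identity $1\neq 0$. A Morita context $(R,S,M,N,f,g)$: rings $R,S$, an $R$-$S$-bimodule $M$, an $S$-$R$-bimodule $N$, bimodule morphisms $f:M\otimes_SN\to R$, $g:N\otimes_RM\to S$, with $[m,n]=f(m\otimes n)$, $(n,m)=g(n\otimes m)$ satisfying $[m,n]m'=m(n,m')$ and $n[m,n']=(n,m)n'$. The context is strict if $f$ and $g$ are surjective. Its Morita context ring $T=\left[\begin{smallmatrix} R & M\\ N & S\end{smallmatrix}\right]$ consists of formal matrices with entrywise addition and product $\left[\begin{smallmatrix} r & m\\ n & s\end{smallmatrix}\right]\left[\begin{smallmatrix} r' & m'\\ n' & s'\end{smallmatrix}\right]=\left[\begin{smallmatrix} rr'+[m,n'] & rm'+ms'\\ nr'+sn' & (n,m')+ss'\end{smallmatrix}\right]$; $T'=\left[\begin{smallmatrix} R' & M'\\ N' & S'\end{smallmatrix}\right]$ similarly. $T$ is $\mathbb Z$-graded with $T_{-1}=\left[\begin{smallmatrix} 0 & 0\\ N & 0\end{smallmatrix}\right]$, $T_0=\left[\begin{smallmatrix} R & 0\\ 0 & S\end{smallmatrix}\right]$, $T_1=\left[\begin{smallmatrix} 0 & M\\ 0 & 0\end{smallmatrix}\right]$,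 $T_i=0$ otherwise. A ring isomorphism $\phi:T\to T'$ is graded if $\phi(T_i)\subseteq T'_i$ for all $i$, anti-graded if $\phi(T_i)\subseteq T'_{-i}$ for all $i$; $\mathrm{Iso}_g(T,T')$ is the set of all graded and all anti-graded isomorphisms. $\mathrm{Iso}_0(T,T')=\mathrm{Iso}_0^0(T,T')\cup\mathrm{Iso}_0^1(T,T')$, where $\mathrm{Iso}_0^0(T,T')$ is the set of maps $\phi\left(\left[\begin{smallmatrix} r & m\\ n & s\end{smallmatrix}\right]\right)=\left[\begin{smallmatrix}\gamma(r) & \gamma(r)m'_0-m'_0\delta(s)+u(m)\\ n'_0\gamma(r)-\delta(s)n'_0+v(n) & \delta(s)\end{smallmatrix}\right]$ with $\gamma:R\to R'$, $\delta:S\to S'$ ring isomorphisms, $u:M\to M'$, $v:N\to N'$ additive bijections with $u(rms)=\gamma(r)u(m)\delta(s)$, $v(snr)=\delta(s)v(n)\gamma(r)$, and $m'_0\in M'$, $n'_0\in N'$ with $[m'_0,N']=0$, $(N',m'_0)=0$, $[M',n'_0]=0$, $(n'_0,M')=0$, $[u(m),v(n)]=\gamma([m,n])$, $(v(n),u(m))=\delta((n,m))$; and $\mathrm{Iso}_0^1(T,T')$ is the set of maps $\psi\left(\left[\begin{smallmatrix} r & m\\ n & s\end{smallmatrix}\right]\right)=\left[\begin{smallmatrix}\sigma(s) & m'_*\rho(r)-\sigma(s)m'_*+\nu(n)\\ \rho(r)n'_*-n'_*\sigma(s)+\mu(m) & \rho(r)\end{smallmatrix}\right]$ with $\rho:R\to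 S'$, $\sigma:S\to R'$ ring isomorphisms, $\mu:M\to N'$, $\nu:N\to M'$ additive bijections with $\mu(rms)=\rho(r)\mu(m)\sigma(s)$, $\nu(snr)=\sigma(s)\nu(n)\rho(r)$, and $m'_*\in M'$, $n'_*\in N'$ with $[m'_*,N']=0$, $(N',m'_* )=0$, $[M',n'_*]=0$, $(n'_*,M')=0$, $(\mu(m),\nu(n))=\rho([m,n])$, $[\nu(n),\mu(m)]=\sigma((n,m))$. *)

theory Defs
  imports Main
begin

text \<open>The rings R, S are types of class ring_1
(rings with 1 \<noteq> 0); M, N are abelian groups with explicit actions.
  lmM: left R-action on M, rmM: right S-action on M,
  lmN: left S-action on N, rmN: right R-action on N,
  pf m n = [m,n] in R,  pg n m = (n,m) in S.\<close>

record ('r, 'm, 'n, 's) morita =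
  lmM :: "'r \<Rightarrow> 'm \<Rightarrow> 'm"
  rmM :: "'m \<Rightarrow> 's \<Rightarrow> 'm"
  lmN :: "'s \<Rightarrow> 'n \<Rightarrow> 'n"
  rmN :: "'n \<Rightarrow> 'r \<Rightarrow> 'n"
  pf  :: "'m \<Rightarrow> 'n \<Rightarrow> 'r"
  pg  :: "'n \<Rightarrow> 'm \<Rightarrow> 's"

definition morita_context ::
  "('r::ring_1, 'm::ab_group_add, 'n::ab_group_add, 's::ring_1) morita \<Rightarrow> bool" where
  "morita_context C \<longleftrightarrow>
     \<comment> \<open>M is an R-S-bimodule\<close>
     (\<forall>r m m'. lmM C r (m + m') = lmM C r m + lmM C r m') \<and>
     (\<forall>r r' m. lmM C (r + r') m = lmM C r m + lmM C r' m) \<and>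
     (\<forall>r r' m. lmM C (r * r') m = lmM C r (lmM C r' m)) \<and>
     (\<forall>m. lmM C 1 m = m) \<and>
     (\<forall>m m' s. rmM C (m + m') s = rmM C m s + rmM C m' s) \<and>
     (\<forall>m s s'. rmM C m (s + s') = rmM C m s + rmM C m s') \<and>
     (\<forall>m s s'. rmM C m (s * s') = rmM C (rmM C m s) s') \<and>
     (\<forall>m. rmM C m 1 = m) \<and>
     (\<forall>r m s. rmM C (lmM C r m) s = lmM C r (rmM C m s)) \<and>
     \<comment> \<open>N is an S-R-bimodule\<close>
     (\<forall>s n n'. lmN C s (n + n') = lmN C s n + lmN C s n') \<and>
     (\<forall>s s' n. lmN C (s + s') n = lmN C s n + lmN C s' n) \<and>
     (\<forall>s s' n. lmN C (s * s') n = lmN C s (lmN C s' n)) \<and>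
     (\<forall>n. lmN C 1 n = n) \<and>
     (\<forall>n n' r. rmN C (n + n') r = rmN C n r + rmN C n' r) \<and>
     (\<forall>n r r'. rmN C n (r + r') = rmN C n r + rmN C n r') \<and>
     (\<forall>n r r'. rmN C n (r * r') = rmN C (rmN C n r) r') \<and>
     (\<forall>n. rmN C n 1 = n) \<and>
     (\<forall>s n r. rmN C (lmN C s n) r = lmN C s (rmN C n r)) \<and>
     \<comment> \<open>f : M \<otimes>_S N \<rightarrow> R is an R-R-bimodule map\<close>
     (\<forall>m m' n. pf C (m + m') n = pf C m n + pf C m' n) \<and>
     (\<forall>m n n'. pf C m (n + n') = pf C m n + pf C m n') \<and>
     (\<forall>m s n. pf C (rmM C m s) n = pf C m (lmN C s n)) \<and>
     (\<forall>r m n. pf C (lmM C r m) n = r * pf C m n) \<and>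
     (\<forall>m n r. pf C m (rmN C n r) = pf C m n * r) \<and>
     \<comment> \<open>g : N \<otimes>_R M \<rightarrow> S is an S-S-bimodule map\<close>
     (\<forall>n n' m. pg C (n + n') m = pg C n m + pg C n' m) \<and>
     (\<forall>n m m'. pg C n (m + m') = pg C n m + pg C n m') \<and>
     (\<forall>n r m. pg C (rmN C n r) m = pg C n (lmM C r m)) \<and>
     (\<forall>s n m. pg C (lmN C s n) m = s * pg C n m) \<and>
     (\<forall>n m s. pg C n (rmM C m s) = pg C n m * s) \<and>
     \<comment> \<open>associativity conditions\<close>
     (\<forall>m n m'. lmM C (pf C m n) m' = rmM C m (pg C n m')) \<and>
     (\<forall>n m n'. rmN C n (pf C m n') = lmN C (pg C n m) n')"

text \<open>Strictness: f and g are surjective, i.e. R (resp. S) is additively generated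
by the elements [m,n] (resp. (n,m)).\<close>
definition strict ::
  "('r::ring_1, 'm::ab_group_add, 'n::ab_group_add, 's::ring_1) morita \<Rightarrow> bool" where
  "strict C \<longleftrightarrow>
     (\<forall>r. \<exists>xs. r = sum_list (map (\<lambda>(m, n). pf C m n) xs)) \<and>
     (\<forall>s. \<exists>xs. s = sum_list (map (\<lambda>(n, m). pg C n m) xs))"

text \<open>Elements of the Morita context ring T, written as (r, m, n, s) for
the matrix [[r, m], [n, s]].\<close>
definition tadd ::
  "('r::ring_1 \<times> 'm::ab_group_add \<times> 'n::ab_group_add \<times> 's::ring_1) \<Rightarrow> ('r \<times> 'm \<times> 'n \<times> 's) \<Rightarrow> ('r \<times> 'm \<times> 'n \<times> 's)" where
  "tadd x y = (case x of (r, m, n, s) \<Rightarrow> case y of (r', m', n', s') \<Rightarrow>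
      (r + r', m + m', n + n', s + s'))"

definition tmul ::
  "('r::ring_1, 'm::ab_group_add, 'n::ab_group_add, 's::ring_1) morita \<Rightarrow>
   ('r \<times> 'm \<times> 'n \<times> 's) \<Rightarrow> ('r \<times> 'm \<times> 'n \<times> 's) \<Rightarrow> ('r \<times> 'm \<times> 'n \<times> 's)" where
  "tmul C x y = (case x of (r, m, n, s) \<Rightarrow> case y of (r', m', n', s') \<Rightarrow>
      (r * r' + pf C m n', lmM C r m' + rmM C m s',
       rmN C n r' + lmN C s n', pg C n m' + s * s'))"

definition tone :: "('r::ring_1 \<times> 'm::ab_group_add \<times> 'n::ab_group_add \<times> 's::ring_1)" where
  "tone = (1, 0, 0, 1)"

definition ring_iso_T ::
  "('r::ring_1, 'm::ab_group_add, 'n::ab_group_add, 's::ring_1) morita \<Rightarrow>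
   ('r2::ring_1, 'm2::ab_group_add, 'n2::ab_group_add, 's2::ring_1) morita \<Rightarrow>
   ('r \<times> 'm \<times> 'n \<times> 's \<Rightarrow> 'r2 \<times> 'm2 \<times> 'n2 \<times> 's2) \<Rightarrow> bool" where
  "ring_iso_T C C' \<phi> \<longleftrightarrow> bij \<phi> \<and>
     (\<forall>x y. \<phi> (tadd x y) = tadd (\<phi> x) (\<phi> y)) \<and>
     (\<forall>x y. \<phi> (tmul C x y) = tmul C' (\<phi> x) (\<phi> y)) \<and>
     \<phi> tone = tone"

definition in_T0 :: "('r::zero \<times> 'm::zero \<times> 'n::zero \<times> 's::zero) \<Rightarrow> bool" where
  "in_T0 x = (case x of (r, m, n, s) \<Rightarrow> m = 0 \<and> n = 0)"

definition in_T1 :: "('r::zero \<times> 'm::zero \<times> 'n::zero \<times> 's::zero) \<Rightarrow> bool" where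
  "in_T1 x = (case x of (r, m, n, s) \<Rightarrow> r = 0 \<and> n = 0 \<and> s = 0)"

definition in_Tm1 :: "('r::zero \<times> 'm::zero \<times> 'n::zero \<times> 's::zero) \<Rightarrow> bool" where
  "in_Tm1 x = (case x of (r, m, n, s) \<Rightarrow> r = 0 \<and> m = 0 \<and> s = 0)"

text \<open>T_i = 0 for other i, and any ring map sends 0 to 0, so only i \<in> {-1,0,1} matter.\<close>
definition graded_map ::
  "('r::zero \<times> 'm::zero \<times> 'n::zero \<times> 's::zero \<Rightarrow> 'r2::zero \<times> 'm2::zero \<times> 'n2::zero \<times> 's2::zero) \<Rightarrow> bool" where
  "graded_map \<phi> \<longleftrightarrow> (\<forall>x. in_T0 x \<longrightarrow> in_T0 (\<phi> x)) \<and>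
     (\<forall>x. in_T1 x \<longrightarrow> in_T1 (\<phi> x)) \<and> (\<forall>x. in_Tm1 x \<longrightarrow> in_Tm1 (\<phi> x)) \<and> \<phi> (0,0,0,0) = (0,0,0,0)"

definition antigraded_map ::
  "('r::zero \<times> 'm::zero \<times> 'n::zero \<times> 's::zero \<Rightarrow> 'r2::zero \<times> 'm2::zero \<times> 'n2::zero \<times> 's2::zero) \<Rightarrow> bool" where
  "antigraded_map \<phi> \<longleftrightarrow> (\<forall>x. in_T0 x \<longrightarrow> in_T0 (\<phi> x)) \<and>
     (\<forall>x. in_T1 x \<longrightarrow> in_Tm1 (\<phi> x)) \<and> (\<forall>x. in_Tm1 x \<longrightarrow> in_T1 (\<phi> x)) \<and> \<phi> (0,0,0,0) = (0,0,0,0)"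

definition Iso_g ::
  "('r::ring_1, 'm::ab_group_add, 'n::ab_group_add, 's::ring_1) morita \<Rightarrow>
   ('r2::ring_1, 'm2::ab_group_add, 'n2::ab_group_add, 's2::ring_1) morita \<Rightarrow>
   ('r \<times> 'm \<times> 'n \<times> 's \<Rightarrow> 'r2 \<times> 'm2 \<times> 'n2 \<times> 's2) set" where
  "Iso_g C C' = {\<phi>. ring_iso_T C C' \<phi> \<and> (graded_map \<phi> \<or> antigraded_map \<phi>)}"

definition ring_iso_map :: "('a::ring_1 \<Rightarrow> 'b::ring_1) \<Rightarrow> bool" where
  "ring_iso_map h \<longleftrightarrow> bij h \<and> (\<forall>a b. h (a + b) = h a + h b) \<and>
     (\<forall>a b. h (a * b) = h a * h b) \<and> h 1 = 1"

definition additive_bij :: "('a::ab_group_add \<Rightarrow> 'b::ab_group_add) \<Rightarrow> bool" where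
  "additive_bij h \<longleftrightarrow> bij h \<and> (\<forall>a b. h (a + b) = h a + h b)"

definition Iso00 ::
  "('r::ring_1, 'm::ab_group_add, 'n::ab_group_add, 's::ring_1) morita \<Rightarrow>
   ('r2::ring_1, 'm2::ab_group_add, 'n2::ab_group_add, 's2::ring_1) morita \<Rightarrow>
   ('r \<times> 'm \<times> 'n \<times> 's \<Rightarrow> 'r2 \<times> 'm2 \<times> 'n2 \<times> 's2) set" where
  "Iso00 C C' = {\<phi>. \<exists>(\<gamma> :: 'r \<Rightarrow> 'r2) (\<delta> :: 's \<Rightarrow> 's2) (u :: 'm \<Rightarrow> 'm2) (v :: 'n \<Rightarrow> 'n2) m0 n0.
     ring_iso_map \<gamma> \<and> ring_iso_map \<delta> \<and> additive_bij u \<and> additive_bij v \<and>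
     (\<forall>r m s. u (rmM C (lmM C r m) s) = rmM C' (lmM C' (\<gamma> r) (u m)) (\<delta> s)) \<and>
     (\<forall>s n r. v (rmN C (lmN C s n) r) = rmN C' (lmN C' (\<delta> s) (v n)) (\<gamma> r)) \<and>
     (\<forall>n'. pf C' m0 n' = 0) \<and> (\<forall>n'. pg C' n' m0 = 0) \<and>
     (\<forall>m'. pf C' m' n0 = 0) \<and> (\<forall>m'. pg C' n0 m' = 0) \<and>
     (\<forall>m n. pf C' (u m) (v n) = \<gamma> (pf C m n)) \<and>
     (\<forall>m n. pg C' (v n) (u m) = \<delta> (pg C n m)) \<and>
     \<phi> = (\<lambda>(r, m, n, s). (\<gamma> r,
                          lmM C' (\<gamma> r) m0 - rmM C' m0 (\<delta> s) + u m,
                          rmN C' n0 (\<gamma> r) - lmN C' (\<delta> s) n0 + v n,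
                          \<delta> s))}"

definition Iso01 ::
  "('r::ring_1, 'm::ab_group_add, 'n::ab_group_add, 's::ring_1) morita \<Rightarrow>
   ('r2::ring_1, 'm2::ab_group_add, 'n2::ab_group_add, 's2::ring_1) morita \<Rightarrow>
   ('r \<times> 'm \<times> 'n \<times> 's \<Rightarrow> 'r2 \<times> 'm2 \<times> 'n2 \<times> 's2) set" where
  "Iso01 C C' = {\<psi>. \<exists>(\<rho> :: 'r \<Rightarrow> 's2) (\<sigma> :: 's \<Rightarrow> 'r2) (\<mu> :: 'm \<Rightarrow> 'n2) (\<nu> :: 'n \<Rightarrow> 'm2) ms ns.
     ring_iso_map \<rho> \<and> ring_iso_map \<sigma> \<and> additive_bij \<mu> \<and> additive_bij \<nu> \<and>
     (\<forall>r m s. \<mu> (rmM C (lmM C r m) s) = rmN C' (lmN C' (\<rho> r) (\<mu> m)) (\<sigma> s)) \<and>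
     (\<forall>s n r. \<nu> (rmN C (lmN C s n) r) = rmM C' (lmM C' (\<sigma> s) (\<nu> n)) (\<rho> r)) \<and>
     (\<forall>n'. pf C' ms n' = 0) \<and> (\<forall>n'. pg C' n' ms = 0) \<and>
     (\<forall>m'. pf C' m' ns = 0) \<and> (\<forall>m'. pg C' ns m' = 0) \<and>
     (\<forall>m n. pg C' (\<mu> m) (\<nu> n) = \<rho> (pf C m n)) \<and>
     (\<forall>m n. pf C' (\<nu> n) (\<mu> m) = \<sigma> (pg C n m)) \<and>
     \<psi> = (\<lambda>(r, m, n, s). (\<sigma> s,
                          rmM C' ms (\<rho> r) - lmM C' (\<sigma> s) ms + \<nu> n,
                          lmN C' (\<rho> r) ns - rmN C' ns (\<sigma> s) + \<mu> m,
                          \<rho> r))}"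

end

theory Submission
  imports Defs
begin

lemma add_zero_map:
  fixes f :: "'a::ab_group_add \<Rightarrow> 'b::ab_group_add"
  assumes "\<forall>a b. f (a + b) = f a + f b"
  shows "f 0 = 0"
proof -
  have "f 0 = f 0 + f 0" using assms by (metis add_0)
  thus ?thesis by simp
qed

lemma add_sum_list:
  fixes f :: "'a::ab_group_add \<Rightarrow> 'b::ab_group_add"
  assumes "\<forall>a b. f (a + b) = f a + f b"
  shows "f (sum_list (map g xs)) = sum_list (map (\<lambda>x. f (g x)) xs)"
  using add_zero_map[OF assms] assms by (induction xs) auto

lemma mc_facts:
  assumes "morita_context C"
  shows "\<forall>r a b. lmM C r (a + b) = lmM C r a + lmM C r b"
    "\<forall>a b. (\<lambda>r. lmM C r m) (a + b) = (\<lambda>r. lmM C r m) a + (\<lambda>r. lmM C r m) b"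
    "\<forall>a b. (\<lambda>s. rmM C m s) (a + b) = (\<lambda>s. rmM C m s) a + (\<lambda>s. rmM C m s) b"
    "\<forall>a b. (\<lambda>r. rmN C n r) (a + b) = (\<lambda>r. rmN C n r) a + (\<lambda>r. rmN C n r) b"
    "\<forall>a b. (\<lambda>s. lmN C s n) (a + b) = (\<lambda>s. lmN C s n) a + (\<lambda>s. lmN C s n) b"
    "\<forall>a b. (\<lambda>m. lmM C r m) (a + b) = (\<lambda>m. lmM C r m) a + (\<lambda>m. lmM C r m) b"
    "\<forall>a b. (\<lambda>m. rmM C m s) (a + b) = (\<lambda>m. rmM C m s) a + (\<lambda>m. rmM C m s) b"
    "\<forall>a b. (\<lambda>n. rmN C n r) (a + b) = (\<lambda>n. rmN C n r) a + (\<lambda>n. rmN C n r) b"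
    "\<forall>a b. (\<lambda>n. lmN C s n) (a + b) = (\<lambda>n. lmN C s n) a + (\<lambda>n. lmN C s n) b"
  using assms unfolding morita_context_def by auto

lemma mc_zero:
  assumes "morita_context C"
  shows "lmM C r 0 = 0" "rmM C 0 s = 0" "rmN C 0 r = 0" "lmN C s 0 = 0"
    "lmM C 0 m = 0" "rmM C m 0 = 0" "rmN C n 0 = 0" "lmN C 0 n = 0"
  using add_zero_map[OF mc_facts(6)[OF assms]] add_zero_map[OF mc_facts(7)[OF assms]]
    add_zero_map[OF mc_facts(8)[OF assms]] add_zero_map[OF mc_facts(9)[OF assms]]
    add_zero_map[OF mc_facts(2)[OF assms]] add_zero_map[OF mc_facts(3)[OF assms]]
    add_zero_map[OF mc_facts(4)[OF assms]] add_zero_map[OF mc_facts(5)[OF assms]]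
  by auto

lemma kill_m0:
  assumes mc: "morita_context C'"
    and one: "(1::'r2::ring_1) = sum_list (map (\<lambda>(m, n). pf C' m n) xs)"
    and z: "\<forall>n. pg C' n m0 = 0"
  shows "m0 = (0::'m2::ab_group_add)"
proof -
  have "m0 = lmM C' 1 m0" using mc unfolding morita_context_def by auto
  also have "\<dots> = sum_list (map (\<lambda>x. lmM C' (case x of (m, n) \<Rightarrow> pf C' m n) m0) xs)"
    unfolding one by (rule add_sum_list[OF mc_facts(2)[OF mc]])
  also have "\<dots> = sum_list (map (\<lambda>x. 0) xs)"
  proof (rule arg_cong[where f=sum_list], rule map_cong[OF refl])
    fix x assume "x \<in> set xs"
    obtain m n where x: "x = (m, n)" by fastforce
    have "lmM C' (pf C' m n) m0 = rmM C' m (pg C' n m0)" using mc unfolding morita_context_def by auto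
    thus "lmM C' (case x of (m, n) \<Rightarrow> pf C' m n) m0 = 0" using z mc_zero(6)[OF mc] x by simp
  qed
  finally show ?thesis by (induction xs) auto
qed

lemma kill_n0:
  assumes mc: "morita_context C'"
    and one: "(1::'r2::ring_1) = sum_list (map (\<lambda>(m, n). pf C' m n) xs)"
    and z: "\<forall>m. pg C' n0 m = 0"
  shows "n0 = (0::'n2::ab_group_add)"
proof -
  have "n0 = rmN C' n0 1" using mc unfolding morita_context_def by auto
  also have "\<dots> = sum_list (map (\<lambda>x. rmN C' n0 (case x of (m, n) \<Rightarrow> pf C' m n)) xs)"
    unfolding one by (rule add_sum_list[OF mc_facts(4)[OF mc]])
  also have "\<dots> = sum_list (map (\<lambda>x. 0) xs)"
  proof (rule arg_cong[where f=sum_list], rule map_cong[OF refl])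
    fix x assume "x \<in> set xs"
    obtain m n where x: "x = (m, n)" by fastforce
    have "rmN C' n0 (pf C' m n) = lmN C' (pg C' n0 m) n" using mc unfolding morita_context_def by auto
    thus "rmN C' n0 (case x of (m, n) \<Rightarrow> pf C' m n) = 0" using z mc_zero(8)[OF mc] x by simp
  qed
  finally show ?thesis by (induction xs) auto
qed


lemma one_span00:
  fixes C :: "('r::ring_1, 'm::ab_group_add, 'n::ab_group_add, 's::ring_1) morita"
    and C' :: "('r2::ring_1, 'm2::ab_group_add, 'n2::ab_group_add, 's2::ring_1) morita"
  assumes mcC: "morita_context C" and mcC': "morita_context C'"
    and st: "strict C \<or> strict C'"
    and \<gamma>: "ring_iso_map \<gamma>" and u: "additive_bij u" and v: "additive_bij v"
    and pfu: "\<forall>m n. pf C' (u m) (v n) = \<gamma> (pf C m n)"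
  shows "\<exists>xs. (1::'r2::ring_1) = sum_list (map (\<lambda>(m, n). pf C' m n) xs)"
  using st
proof
  assume "strict C'" thus ?thesis unfolding strict_def by blast
next
  assume "strict C"
  then obtain xs where xs: "(1::'r) = sum_list (map (\<lambda>(m, n). pf C m n) xs)"
    unfolding strict_def by blast
  have "(1::'r2) = \<gamma> 1" using \<gamma> unfolding ring_iso_map_def by simp
  also have "\<dots> = sum_list (map (\<lambda>x. \<gamma> (case x of (m, n) \<Rightarrow> pf C m n)) xs)"
    unfolding xs by (rule add_sum_list) (use \<gamma> in \<open>simp add: ring_iso_map_def\<close>)
  also have "\<dots> = sum_list (map (\<lambda>(m, n). pf C' m n) (map (\<lambda>(m, n). (u m, v n)) xs))"
    by (simp add: o_def case_prod_beta pfu)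
  finally show ?thesis by blast
qed

lemma one_span01:
  fixes C :: "('r::ring_1, 'm::ab_group_add, 'n::ab_group_add, 's::ring_1) morita"
    and C' :: "('r2::ring_1, 'm2::ab_group_add, 'n2::ab_group_add, 's2::ring_1) morita"
  assumes mcC: "morita_context C" and mcC': "morita_context C'"
    and st: "strict C \<or> strict C'"
    and \<sigma>: "ring_iso_map \<sigma>"
    and pfu: "\<forall>m n. pf C' (\<nu> n) (\<mu> m) = \<sigma> (pg C n m)"
  shows "\<exists>xs. (1::'r2::ring_1) = sum_list (map (\<lambda>(m, n). pf C' m n) xs)"
  using st
proof
  assume "strict C'" thus ?thesis unfolding strict_def by blast
next
  assume "strict C"
  then obtain xs where xs: "(1::'s) = sum_list (map (\<lambda>(n, m). pg C n m) xs)"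
    unfolding strict_def by blast
  have "(1::'r2) = \<sigma> 1" using \<sigma> unfolding ring_iso_map_def by simp
  also have "\<dots> = sum_list (map (\<lambda>x. \<sigma> (case x of (n, m) \<Rightarrow> pg C n m)) xs)"
    unfolding xs by (rule add_sum_list) (use \<sigma> in \<open>simp add: ring_iso_map_def\<close>)
  also have "\<dots> = sum_list (map (\<lambda>(m, n). pf C' m n) (map (\<lambda>(n, m). (\<nu> n, \<mu> m)) xs))"
    by (simp add: o_def case_prod_beta pfu)
  finally show ?thesis by blast
qed

lemma bij4:
  fixes a :: "'a \<Rightarrow> 'b" and b :: "'c \<Rightarrow> 'd" and c :: "'e \<Rightarrow> 'f" and d :: "'g \<Rightarrow> 'h"
  assumes "bij a" "bij b" "bij c" "bij d"
  shows "bij (\<lambda>(r, m, n, s). (a r, b m, c n, d s))"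
proof (rule bijI)
  show "inj (\<lambda>(r, m, n, s). (a r, b m, c n, d s))"
    using assms by (auto simp: inj_def bij_def)
  show "surj (\<lambda>(r, m, n, s). (a r, b m, c n, d s))"
    unfolding surj_def
  proof
    fix y :: "'b \<times> 'd \<times> 'f \<times> 'h"
    obtain p q w z where y: "y = (p, q, w, z)" by (cases y) auto
    show "\<exists>x. y = (\<lambda>(r, m, n, s). (a r, b m, c n, d s)) x"
      by (rule exI[where x="(inv a p, inv b q, inv c w, inv d z)"]) (use assms y in \<open>simp add: bij_def surj_f_inv_f\<close>)
  qed
qed

lemma bij4':
  fixes a :: "'a \<Rightarrow> 'b" and b :: "'c \<Rightarrow> 'd" and c :: "'e \<Rightarrow> 'f" and d :: "'g \<Rightarrow> 'h"
  assumes "bij a" "bij b" "bij c" "bij d"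
  shows "bij (\<lambda>(r, m, n, s). (d s, c n, b m, a r))"
proof (rule bijI)
  show "inj (\<lambda>(r, m, n, s). (d s, c n, b m, a r))"
    using assms by (auto simp: inj_def bij_def)
  show "surj (\<lambda>(r, m, n, s). (d s, c n, b m, a r))"
    unfolding surj_def
  proof
    fix y :: "'h \<times> 'f \<times> 'd \<times> 'b"
    obtain p q w z where y: "y = (p, q, w, z)" by (cases y) auto
    show "\<exists>x. y = (\<lambda>(r, m, n, s). (d s, c n, b m, a r)) x"
      by (rule exI[where x="(inv a z, inv b w, inv c q, inv d p)"]) (use assms y in \<open>simp add: bij_def surj_f_inv_f\<close>)
  qed
qed

lemma iso00_good:
  fixes C :: "('r::ring_1, 'm::ab_group_add, 'n::ab_group_add, 's::ring_1) morita"
    and C' :: "('r2::ring_1, 'm2::ab_group_add, 'n2::ab_group_add, 's2::ring_1) morita"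
  assumes mcC: "morita_context C" and mcC': "morita_context C'"
    and st: "strict C \<or> strict C'" and phi: "\<phi> \<in> Iso00 C C'"
  shows "ring_iso_T C C' \<phi> \<and> graded_map \<phi>"
proof -
  obtain \<gamma> \<delta> u v m0 n0 where
    \<gamma>: "ring_iso_map \<gamma>" and \<delta>: "ring_iso_map \<delta>" and u: "additive_bij u" and v: "additive_bij v"
    and uh: "\<forall>r m s. u (rmM C (lmM C r m) s) = rmM C' (lmM C' (\<gamma> r) (u m)) (\<delta> s)"
    and vh: "\<forall>s n r. v (rmN C (lmN C s n) r) = rmN C' (lmN C' (\<delta> s) (v n)) (\<gamma> r)"
    and z1: "\<forall>n'. pg C' n' m0 = 0" and z2: "\<forall>m'. pg C' n0 m' = 0"
    and pfu: "\<forall>m n. pf C' (u m) (v n) = \<gamma> (pf C m n)"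
    and pgu: "\<forall>m n. pg C' (v n) (u m) = \<delta> (pg C n m)"
    and phid: "\<phi> = (\<lambda>(r, m, n, s). (\<gamma> r,
                          lmM C' (\<gamma> r) m0 - rmM C' m0 (\<delta> s) + u m,
                          rmN C' n0 (\<gamma> r) - lmN C' (\<delta> s) n0 + v n,
                          \<delta> s))"
    using phi unfolding Iso00_def by blast
  obtain xs where one: "(1::'r2) = sum_list (map (\<lambda>(m, n). pf C' m n) xs)"
    using one_span00[OF mcC mcC' st \<gamma> u v pfu] by blast
  have m0: "m0 = 0" by (rule kill_m0[OF mcC' one z1])
  have n0: "n0 = 0" by (rule kill_n0[OF mcC' one z2])
  have phid2: "\<phi> = (\<lambda>(r, m, n, s). (\<gamma> r, u m, v n, \<delta> s))"
    unfolding phid m0 n0 using mc_zero[OF mcC'] by simp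
  have ga: "\<forall>a b. \<gamma> (a + b) = \<gamma> a + \<gamma> b" "\<forall>a b. \<gamma> (a * b) = \<gamma> a * \<gamma> b" "\<gamma> 1 = 1"
    using \<gamma> unfolding ring_iso_map_def by auto
  have de: "\<forall>a b. \<delta> (a + b) = \<delta> a + \<delta> b" "\<forall>a b. \<delta> (a * b) = \<delta> a * \<delta> b" "\<delta> 1 = 1"
    using \<delta> unfolding ring_iso_map_def by auto
  have ua: "\<forall>a b. u (a + b) = u a + u b" using u unfolding additive_bij_def by auto
  have va: "\<forall>a b. v (a + b) = v a + v b" using v unfolding additive_bij_def by auto
  have g0: "\<gamma> 0 = 0" "\<delta> 0 = 0" "u 0 = 0" "v 0 = 0"
    using add_zero_map[OF ga(1)] add_zero_map[OF de(1)] add_zero_map[OF ua] add_zero_map[OF va] by auto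
  have ul: "u (lmM C r m) = lmM C' (\<gamma> r) (u m)" for r m
    using uh[rule_format, of r m 1] mcC mcC' de(3) unfolding morita_context_def by simp
  have ur: "u (rmM C m s) = rmM C' (u m) (\<delta> s)" for s m
    using uh[rule_format, of 1 m s] mcC mcC' ga(3) unfolding morita_context_def by simp
  have vl: "v (lmN C s n) = lmN C' (\<delta> s) (v n)" for s n
    using vh[rule_format, of s n 1] mcC mcC' ga(3) unfolding morita_context_def by simp
  have vr: "v (rmN C n r) = rmN C' (v n) (\<gamma> r)" for r n
    using vh[rule_format, of 1 n r] mcC mcC' de(3) unfolding morita_context_def by simp
  have bj: "bij \<phi>" unfolding phid2
    by (rule bij4) (use \<gamma> \<delta> u v in \<open>auto simp: ring_iso_map_def additive_bij_def\<close>)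
  have "ring_iso_T C C' \<phi>"
    unfolding ring_iso_T_def
    using bj ga de ua va g0 ul ur vl vr pfu pgu
    by (auto simp: phid2 tadd_def tmul_def tone_def split: prod.splits)
  moreover have "graded_map \<phi>"
    unfolding graded_map_def in_T0_def in_T1_def in_Tm1_def phid2 using g0 by auto
  ultimately show ?thesis by blast
qed

lemma iso01_good:
  fixes C :: "('r::ring_1, 'm::ab_group_add, 'n::ab_group_add, 's::ring_1) morita"
    and C' :: "('r2::ring_1, 'm2::ab_group_add, 'n2::ab_group_add, 's2::ring_1) morita"
  assumes mcC: "morita_context C" and mcC': "morita_context C'"
    and st: "strict C \<or> strict C'" and phi: "\<psi> \<in> Iso01 C C'"
  shows "ring_iso_T C C' \<psi> \<and> antigraded_map \<psi>"
proof -
  obtain \<rho> \<sigma> \<mu> \<nu> ms ns where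
    \<rho>: "ring_iso_map \<rho>" and \<sigma>: "ring_iso_map \<sigma>" and u: "additive_bij \<mu>" and v: "additive_bij \<nu>"
    and uh: "\<forall>r m s. \<mu> (rmM C (lmM C r m) s) = rmN C' (lmN C' (\<rho> r) (\<mu> m)) (\<sigma> s)"
    and vh: "\<forall>s n r. \<nu> (rmN C (lmN C s n) r) = rmM C' (lmM C' (\<sigma> s) (\<nu> n)) (\<rho> r)"
    and z1: "\<forall>n'. pg C' n' ms = 0" and z2: "\<forall>m'. pg C' ns m' = 0"
    and pgu: "\<forall>m n. pg C' (\<mu> m) (\<nu> n) = \<rho> (pf C m n)"
    and pfu: "\<forall>m n. pf C' (\<nu> n) (\<mu> m) = \<sigma> (pg C n m)"
    and phid: "\<psi> = (\<lambda>(r, m, n, s). (\<sigma> s,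
                          rmM C' ms (\<rho> r) - lmM C' (\<sigma> s) ms + \<nu> n,
                          lmN C' (\<rho> r) ns - rmN C' ns (\<sigma> s) + \<mu> m,
                          \<rho> r))"
    using phi unfolding Iso01_def by blast
  obtain xs where one: "(1::'r2) = sum_list (map (\<lambda>(m, n). pf C' m n) xs)"
    using one_span01[OF mcC mcC' st \<sigma> pfu] by blast
  have m0: "ms = 0" by (rule kill_m0[OF mcC' one z1])
  have n0: "ns = 0" by (rule kill_n0[OF mcC' one z2])
  have phid2: "\<psi> = (\<lambda>(r, m, n, s). (\<sigma> s, \<nu> n, \<mu> m, \<rho> r))"
    unfolding phid m0 n0 using mc_zero[OF mcC'] by simp
  have ga: "\<forall>a b. \<rho> (a + b) = \<rho> a + \<rho> b" "\<forall>a b. \<rho> (a * b) = \<rho> a * \<rho> b" "\<rho> 1 = 1"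
    using \<rho> unfolding ring_iso_map_def by auto
  have de: "\<forall>a b. \<sigma> (a + b) = \<sigma> a + \<sigma> b" "\<forall>a b. \<sigma> (a * b) = \<sigma> a * \<sigma> b" "\<sigma> 1 = 1"
    using \<sigma> unfolding ring_iso_map_def by auto
  have ua: "\<forall>a b. \<mu> (a + b) = \<mu> a + \<mu> b" using u unfolding additive_bij_def by auto
  have va: "\<forall>a b. \<nu> (a + b) = \<nu> a + \<nu> b" using v unfolding additive_bij_def by auto
  have g0: "\<rho> 0 = 0" "\<sigma> 0 = 0" "\<mu> 0 = 0" "\<nu> 0 = 0"
    using add_zero_map[OF ga(1)] add_zero_map[OF de(1)] add_zero_map[OF ua] add_zero_map[OF va] by auto
  have ul: "\<mu> (lmM C r m) = lmN C' (\<rho> r) (\<mu> m)" for r m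
    using uh[rule_format, of r m 1] mcC mcC' de(3) unfolding morita_context_def by simp
  have ur: "\<mu> (rmM C m s) = rmN C' (\<mu> m) (\<sigma> s)" for s m
    using uh[rule_format, of 1 m s] mcC mcC' ga(3) unfolding morita_context_def by simp
  have vl: "\<nu> (lmN C s n) = lmM C' (\<sigma> s) (\<nu> n)" for s n
    using vh[rule_format, of s n 1] mcC mcC' ga(3) unfolding morita_context_def by simp
  have vr: "\<nu> (rmN C n r) = rmM C' (\<nu> n) (\<rho> r)" for r n
    using vh[rule_format, of 1 n r] mcC mcC' de(3) unfolding morita_context_def by simp
  have bj: "bij \<psi>" unfolding phid2
    by (rule bij4') (use \<rho> \<sigma> u v in \<open>auto simp: ring_iso_map_def additive_bij_def\<close>)
  have "ring_iso_T C C' \<psi>"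
    unfolding ring_iso_T_def
    using bj ga de ua va g0 ul ur vl vr pfu pgu
    by (auto simp: phid2 tadd_def tmul_def tone_def add.commute split: prod.splits)
  moreover have "antigraded_map \<psi>"
    unfolding antigraded_map_def in_T0_def in_T1_def in_Tm1_def phid2 using g0 by auto
  ultimately show ?thesis by blast
qed

theorem proposition3p1:
  fixes C :: "('r::ring_1, 'm::ab_group_add, 'n::ab_group_add, 's::ring_1) morita"
    and C' :: "('r2::ring_1, 'm2::ab_group_add, 'n2::ab_group_add, 's2::ring_1) morita"
  assumes "morita_context C" and "morita_context C'"
    and "strict C \<or> strict C'"
  shows "Iso00 C C' \<union> Iso01 C C' \<subseteq> Iso_g C C' \<and>
         (\<forall>\<phi> \<in> Iso00 C C'. ring_iso_T C C' \<phi> \<and> graded_map \<phi>) \<and>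
         (\<forall>\<psi> \<in> Iso01 C C'. ring_iso_T C C' \<psi> \<and> antigraded_map \<psi>)"
  using iso00_good[OF assms] iso01_good[OF assms] unfolding Iso_g_def by blast

end
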